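(* Let $m,n$ be positive integers and $s,k$ even positive integers. There exists a ${}^2\mathrm{H}(m,n;s,k)$ if and only if $ms=nk$, $2\le s\le n$, $2\le k\le m$, and $s,k$ are not both equal to $2$.
   Context: For positive integers $m,n,s,k,\lambda,t$ with $t$ dividing $\frac{2nk}{\lambda}$, let $v=\frac{2nk}{\lambda}+t$ and $J$ the subgroup of $\mathbb{Z}_v$ of order $t$. A ${}^\lambda\mathrm{H}_t(m,n;s,k)$ is an $m\times n$ partially filled array with entries in $\mathbb{Z}_v$ such that: (a) each row has exactly $s$ and each column exactly $k$ filled cells; (b) the multiset $\{\pm x: x$ an entry of a filled cell$\}$ contains each element of $\mathbb{Z}_v\setminus J$ exactly $\lambda$ times and no element of $J$; (c) every row and every column sums to $0$ in $\mathbb{Z}_v$. The subscript $t$ is omitted when $t=1$, so ${}^2\mathrm{H}(m,n;s,k)$ is over $\mathbb{Z}_{nk+1}$. *)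

theory Defs
  imports Main "HOL-Library.Multiset"
begin

text \<open>An m x n partially filled array with entries in Z_v is modelled as
  A :: nat => nat => int option, where only the cells (i,j) with i < m, j < n
  matter; None means an empty cell, Some x a filled cell whose entry is the
  residue class of x, the representative being required to lie in {0..<v}.\<close>

definition heffter_v :: "nat \<Rightarrow> nat \<Rightarrow> nat \<Rightarrow> nat \<Rightarrow> nat" where
  "heffter_v lam t n k = 2 * n * k div lam + t"

definition filled_cells :: "nat \<Rightarrow> nat \<Rightarrow> (nat \<Rightarrow> nat \<Rightarrow> int option) \<Rightarrow> (nat \<times> nat) set" where
  "filled_cells m n A = {(i, j). i < m \<and> j < n \<and> A i j \<noteq> None}"

definition pm_entries :: "nat \<Rightarrow> nat \<Rightarrow> nat \<Rightarrow> (nat \<Rightarrow> nat \<Rightarrow> int option) \<Rightarrow> int multiset" where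
  "pm_entries v m n A =
     (\<Sum>c\<in>#mset_set (filled_cells m n A).
        {# the (A (fst c) (snd c)) mod int v, (- the (A (fst c) (snd c))) mod int v #})"

text \<open>J is the subgroup of Z_v of order t, i.e. the multiples of v/t.\<close>
definition heffter_array ::
  "nat \<Rightarrow> nat \<Rightarrow> nat \<Rightarrow> nat \<Rightarrow> nat \<Rightarrow> nat \<Rightarrow> (nat \<Rightarrow> nat \<Rightarrow> int option) \<Rightarrow> bool" where
  "heffter_array lam t m n s k A \<longleftrightarrow>
     (let v = heffter_v lam t n k in
       (\<forall>i<m. \<forall>j<n. \<forall>x. A i j = Some x \<longrightarrow> 0 \<le> x \<and> x < int v)
     \<and> (\<forall>i<m. card {j. j < n \<and> A i j \<noteq> None} = s)
     \<and> (\<forall>j<n. card {i. i < m \<and> A i j \<noteq> None} = k)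
     \<and> (\<forall>y\<in>{0..<int v}.
          count (pm_entries v m n A) y = (if int (v div t) dvd y then 0 else lam))
     \<and> (\<forall>i<m. (\<Sum>j<n. case A i j of None \<Rightarrow> 0 | Some x \<Rightarrow> x) mod int v = 0)
     \<and> (\<forall>j<n. (\<Sum>i<m. case A i j of None \<Rightarrow> 0 | Some x \<Rightarrow> x) mod int v = 0))"

definition exists_heffter :: "nat \<Rightarrow> nat \<Rightarrow> nat \<Rightarrow> nat \<Rightarrow> nat \<Rightarrow> nat \<Rightarrow> bool" where
  "exists_heffter lam t m n s k \<longleftrightarrow>
     lam dvd 2 * n * k \<and> t dvd (2 * n * k div lam) \<and> (\<exists>A. heffter_array lam t m n s k A)"

end

theory Submission
  imports Defs
begin


locale gen =
  fixes L m n :: nat and \<phi> :: "nat \<Rightarrow> nat \<times> nat" and val :: "nat \<Rightarrow> int" and v :: nat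
  assumes inj: "inj_on \<phi> {..<L}"
    and rng: "\<And>p. p < L \<Longrightarrow> fst (\<phi> p) < m \<and> snd (\<phi> p) < n"
    and vpos: "0 < v"
begin

definition A :: "nat \<Rightarrow> nat \<Rightarrow> int option" where
  "A i j = (if (i,j) \<in> \<phi> ` {..<L} then Some (val (the_inv_into {..<L} \<phi> (i,j)) mod int v) else None)"

lemma A_phi: "p < L \<Longrightarrow> A (fst (\<phi> p)) (snd (\<phi> p)) = Some (val p mod int v)"
  unfolding A_def using inj by (simp add: the_inv_into_f_f)

lemma A_None: "(i,j) \<notin> \<phi> ` {..<L} \<Longrightarrow> A i j = None"
  unfolding A_def by simp

lemma A_Some_iff: "A i j \<noteq> None \<longleftrightarrow> (i,j) \<in> \<phi> ` {..<L}"
  unfolding A_def by simp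

lemma row_set: "{j. j < n \<and> A i j \<noteq> None} = (snd \<circ> \<phi>) ` {p. p < L \<and> fst (\<phi> p) = i}"
proof (intro equalityI subsetI)
  fix j assume "j \<in> {j. j < n \<and> A i j \<noteq> None}"
  then obtain p where "p < L" "\<phi> p = (i,j)" using A_Some_iff by auto
  then show "j \<in> (snd \<circ> \<phi>) ` {p. p < L \<and> fst (\<phi> p) = i}" by (auto intro!: image_eqI[of _ _ p])
next
  fix j assume "j \<in> (snd \<circ> \<phi>) ` {p. p < L \<and> fst (\<phi> p) = i}"
  then obtain p where p: "p < L" "fst (\<phi> p) = i" "j = snd (\<phi> p)" by auto
  then have "A i j \<noteq> None" using A_phi[of p] by auto
  then show "j \<in> {j. j < n \<and> A i j \<noteq> None}" using rng[of p] p by auto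
qed

lemma col_set: "{i. i < m \<and> A i j \<noteq> None} = (fst \<circ> \<phi>) ` {p. p < L \<and> snd (\<phi> p) = j}"
proof (intro equalityI subsetI)
  fix i assume "i \<in> {i. i < m \<and> A i j \<noteq> None}"
  then obtain p where "p < L" "\<phi> p = (i,j)" using A_Some_iff by auto
  then show "i \<in> (fst \<circ> \<phi>) ` {p. p < L \<and> snd (\<phi> p) = j}" by (auto intro!: image_eqI[of _ _ p])
next
  fix i assume "i \<in> (fst \<circ> \<phi>) ` {p. p < L \<and> snd (\<phi> p) = j}"
  then obtain p where p: "p < L" "snd (\<phi> p) = j" "i = fst (\<phi> p)" by auto
  then have "A i j \<noteq> None" using A_phi[of p] by auto
  then show "i \<in> {i. i < m \<and> A i j \<noteq> None}" using rng[of p] p by auto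
qed

lemma inj_row: "inj_on (snd \<circ> \<phi>) {p. p < L \<and> fst (\<phi> p) = i}"
proof (rule inj_onI)
  fix p q assume "p \<in> {p. p < L \<and> fst (\<phi> p) = i}" "q \<in> {p. p < L \<and> fst (\<phi> p) = i}" "(snd \<circ> \<phi>) p = (snd \<circ> \<phi>) q"
  then have "\<phi> p = \<phi> q" "p \<in> {..<L}" "q \<in> {..<L}" by (auto intro: prod_eqI)
  then show "p = q" using inj by (auto dest: inj_onD)
qed

lemma inj_col: "inj_on (fst \<circ> \<phi>) {p. p < L \<and> snd (\<phi> p) = j}"
proof (rule inj_onI)
  fix p q assume "p \<in> {p. p < L \<and> snd (\<phi> p) = j}" "q \<in> {p. p < L \<and> snd (\<phi> p) = j}" "(fst \<circ> \<phi>) p = (fst \<circ> \<phi>) q"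
  then have "\<phi> p = \<phi> q" "p \<in> {..<L}" "q \<in> {..<L}" by (auto intro: prod_eqI)
  then show "p = q" using inj by (auto dest: inj_onD)
qed

lemma row_card: "card {j. j < n \<and> A i j \<noteq> None} = card {p. p < L \<and> fst (\<phi> p) = i}"
  unfolding row_set by (rule card_image[OF inj_row])

lemma col_card: "card {i. i < m \<and> A i j \<noteq> None} = card {p. p < L \<and> snd (\<phi> p) = j}"
  unfolding col_set by (rule card_image[OF inj_col])

lemma row_sum: "(\<Sum>j<n. case A i j of None \<Rightarrow> 0 | Some x \<Rightarrow> x) = (\<Sum>p\<in>{p. p < L \<and> fst (\<phi> p) = i}. val p mod int v)"
proof -
  let ?g = "\<lambda>j. case A i j of None \<Rightarrow> 0 | Some x \<Rightarrow> x"
  have "(\<Sum>j<n. ?g j) = (\<Sum>j\<in>{j. j < n \<and> A i j \<noteq> None}. ?g j)"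
    by (rule sum.mono_neutral_cong_right) auto
  also have "\<dots> = (\<Sum>p\<in>{p. p < L \<and> fst (\<phi> p) = i}. ?g (snd (\<phi> p)))"
    unfolding row_set sum.reindex[OF inj_row] by simp
  also have "\<dots> = (\<Sum>p\<in>{p. p < L \<and> fst (\<phi> p) = i}. val p mod int v)"
    by (rule sum.cong) (auto simp: A_phi)
  finally show ?thesis .
qed

lemma col_sum: "(\<Sum>i<m. case A i j of None \<Rightarrow> 0 | Some x \<Rightarrow> x) = (\<Sum>p\<in>{p. p < L \<and> snd (\<phi> p) = j}. val p mod int v)"
proof -
  let ?g = "\<lambda>i. case A i j of None \<Rightarrow> 0 | Some x \<Rightarrow> x"
  have "(\<Sum>i<m. ?g i) = (\<Sum>i\<in>{i. i < m \<and> A i j \<noteq> None}. ?g i)"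
    by (rule sum.mono_neutral_cong_right) auto
  also have "\<dots> = (\<Sum>p\<in>{p. p < L \<and> snd (\<phi> p) = j}. ?g (fst (\<phi> p)))"
    unfolding col_set sum.reindex[OF inj_col] by simp
  also have "\<dots> = (\<Sum>p\<in>{p. p < L \<and> snd (\<phi> p) = j}. val p mod int v)"
    by (rule sum.cong) (auto simp: A_phi)
  finally show ?thesis .
qed

lemma filled: "filled_cells m n A = \<phi> ` {..<L}"
proof (intro equalityI subsetI)
  fix c assume "c \<in> filled_cells m n A"
  then show "c \<in> \<phi> ` {..<L}" unfolding filled_cells_def using A_Some_iff by auto
next
  fix c assume "c \<in> \<phi> ` {..<L}"
  then obtain p where p: "p < L" "c = \<phi> p" by auto
  then show "c \<in> filled_cells m n A" unfolding filled_cells_def using rng[of p] A_phi[of p]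
    by (cases c) auto
qed

lemma pm: "pm_entries v m n A = (\<Sum>p<L. {# val p mod int v, (- val p) mod int v #})"
proof -
  have "pm_entries v m n A = (\<Sum>c\<in>\<phi> ` {..<L}. {# the (A (fst c) (snd c)) mod int v, (- the (A (fst c) (snd c))) mod int v #})"
    unfolding pm_entries_def filled sum_unfold_sum_mset ..
  also have "\<dots> = (\<Sum>p<L. {# the (A (fst (\<phi> p)) (snd (\<phi> p))) mod int v, (- the (A (fst (\<phi> p)) (snd (\<phi> p)))) mod int v #})"
    using inj by (simp add: sum.reindex)
  also have "\<dots> = (\<Sum>p<L. {# val p mod int v, (- val p) mod int v #})"
    by (rule sum.cong) (auto simp: A_phi mod_minus_eq)
  finally show ?thesis .
qed

lemma range: "A i j = Some x \<Longrightarrow> 0 \<le> x \<and> x < int v"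
  unfolding A_def using vpos by (auto split: if_splits)

end


definition col :: "nat \<Rightarrow> nat \<Rightarrow> nat" where
  "col n p = (if even n then (p + p div n) mod n else p mod n)"

lemma col_lt: "0 < n \<Longrightarrow> col n p < n"
  unfolding col_def by auto

lemma even_div_Suc: "even (n::nat) \<Longrightarrow> (2*(t::nat)+1) div n = (2*t) div n"
proof -
  assume "even n" then obtain h where h: "n = 2*h" by blast
  have "(2*t+1) div n = (2*t+1) div 2 div h" unfolding h by (simp add: div_mult2_eq)
  also have "\<dots> = t div h" by simp
  also have "\<dots> = (2*t) div 2 div h" by simp
  also have "\<dots> = (2*t) div n" unfolding h by (simp add: div_mult2_eq)
  finally show ?thesis .
qed

lemma col_Suc: "0 < n \<Longrightarrow> col n (2*t+1) = (col n (2*t) + 1) mod n"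
proof (cases "even n")
  case True
  then have "col n (2*t+1) = (2*t + 1 + (2*t) div n) mod n" unfolding col_def using even_div_Suc[OF True, of t] by simp
  also have "\<dots> = ((2*t + (2*t) div n) + 1) mod n" by simp
  also have "\<dots> = ((2*t + (2*t) div n) mod n + 1) mod n" by (simp add: mod_Suc_eq)
  finally show ?thesis unfolding col_def using True by simp
next
  case False
  then show ?thesis unfolding col_def by (simp add: mod_Suc_eq)
qed

lemma mod_eq_close: "(a::nat) mod n = b mod n \<Longrightarrow> a < b + n \<Longrightarrow> b < a + n \<Longrightarrow> a = b"
proof -
  assume h: "a mod n = b mod n" "a < b + n" "b < a + n"
  have "int a mod int n = int b mod int n" unfolding zmod_int[symmetric] using h(1) by simp
  then have "int n dvd int a - int b" by (simp add: mod_eq_dvd_iff)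
  then obtain q where q: "int a - int b = int n * q" by blast
  have "q = 0"
  proof (rule ccontr)
    assume "q \<noteq> 0"
    then have "\<bar>int n * q\<bar> \<ge> int n" by (simp add: abs_mult) (smt (verit) mult_le_cancel_left1 of_nat_0_le_iff)
    then show False using q h(2,3) by linarith
  qed
  then show "a = b" using q by simp
qed

lemma mod_add_cancel_right: "((a::nat) + c) mod n = (b + c) mod n \<Longrightarrow> a mod n = b mod n"
  by (simp add: nat_mod_eq_iff)

lemma col_row_inj_le:
  assumes n: "0 < n" and sn: "s \<le> n" and s: "0 < s" and d: "p div s = p' div s"
    and c: "col n p = col n p'" and le: "p \<le> p'"
  shows "p = p'"
proof -
  have "p' < p div s * s + s" using d s by (simp add: add.commute dividend_less_div_times)
  also have "\<dots> \<le> p + s" by (simp add: div_times_less_eq_dividend)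
  finally have p's: "p' < p + s" .
  then have p'n: "p' < p + n" using sn by linarith
  show ?thesis
  proof (cases "even n")
    case False
    then have "p mod n = p' mod n" using c unfolding col_def by simp
    then show ?thesis by (rule mod_eq_close) (use p'n le in linarith)+
  next
    case True
    let ?q = "p div n" and ?q' = "p' div n"
    have cc: "(p + ?q) mod n = (p' + ?q') mod n" using c True unfolding col_def by simp
    have qq: "?q \<le> ?q'" using le by (simp add: div_le_mono)
    have "p' div n \<le> (p + n) div n" using p'n by (simp add: div_le_mono)
    moreover have "(p + n) div n = p div n + 1" using n by (simp add: div_add_self2)
    ultimately have qq2: "?q' \<le> ?q + 1" by simp
    show ?thesis
    proof (cases "?q' = ?q")
      case True
      then have "p mod n = p' mod n" using mod_add_cancel_right[of p ?q n p'] cc True by simp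
      then show ?thesis by (rule mod_eq_close) (use p'n le in linarith)+
    next
      case False
      then have q1: "?q' = ?q + 1" using qq qq2 by linarith
      then have "(p + ?q) mod n = ((p' + 1) + ?q) mod n" using cc by (simp add: add.assoc)
      then have "p mod n = (p' + 1) mod n" by (rule mod_add_cancel_right)
      then have "(p + n) mod n = (p' + 1) mod n" by simp
      then have "p + n = p' + 1" using mod_eq_close[of "p+n" n "p'+1"] le p'n by linarith
      then have "s = n" using p's sn by linarith
      then have "?q = ?q'" using d by simp
      then show ?thesis using False by simp
    qed
  qed
qed

lemma col_row_inj:
  assumes "0 < n" "s \<le> n" "0 < s" "p div s = p' div s" "col n p = col n p'"
  shows "p = p'"
  using col_row_inj_le[OF assms] col_row_inj_le[OF assms(1-3) assms(4)[symmetric] assms(5)[symmetric]]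
  by linarith

lemma col_layer_inj:
  assumes n: "0 < n" and t: "l*n \<le> t" "t < l*n + n" and t': "l*n \<le> t'" "t' < l*n + n"
    and c: "col n (2*t) = col n (2*t')"
  shows "t = t'"
proof (cases "even n")
  case False
  then have "(2*t) mod n = (2*t') mod n" using c unfolding col_def by simp
  then have "int (2*t) mod int n = int (2*t') mod int n" unfolding zmod_int[symmetric] by simp
  then have "int n dvd int (2*t) - int (2*t')" by (simp add: mod_eq_dvd_iff)
  then have "int n dvd 2 * (int t - int t')" by (simp add: algebra_simps)
  moreover have "coprime (int n) 2" using False by (simp add: coprime_commute)
  ultimately have "int n dvd int t - int t'" using coprime_dvd_mult_right_iff by blast
  then have "int t mod int n = int t' mod int n" by (simp add: mod_eq_dvd_iff)
  then have "int (t mod n) = int (t' mod n)" unfolding zmod_int .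
  then have "t mod n = t' mod n" by simp
  then show ?thesis by (rule mod_eq_close) (use t t' in linarith)+
next
  case True
  then obtain h where h: "n = 2*h" by blast
  have hp: "0 < h" using n h by simp
  have dv: "\<And>x. (2*x) div n = x div h" unfolding h by (simp add: div_mult2_eq)
  have par: "\<And>x. col n (2*x) mod 2 = (x div h) mod 2"
  proof -
    fix x
    have "col n (2*x) = (2*x + x div h) mod n" unfolding col_def using True dv by simp
    then have "col n (2*x) mod 2 = (2*x + x div h) mod 2" unfolding h by (simp add: mod_mod_cancel)
    then show "col n (2*x) mod 2 = (x div h) mod 2" by simp
  qed
  have rng: "\<And>x. l*n \<le> x \<Longrightarrow> x < l*n + n \<Longrightarrow> x div h = 2*l \<or> x div h = 2*l + 1"
  proof -
    fix x assume a: "l*n \<le> x" "x < l*n + n"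
    have "(2*l*h) div h \<le> x div h" by (rule div_le_mono) (use a(1) in \<open>simp add: h algebra_simps\<close>)
    then have lo: "2*l \<le> x div h" using hp by simp
    have "x < (2*l+2)*h" using a(2) unfolding h by (simp add: algebra_simps)
    then have "x div h < 2*l + 2" by (simp add: div_less_iff_less_mult[OF hp])
    with lo show "x div h = 2*l \<or> x div h = 2*l + 1" by linarith
  qed
  have "(t div h) mod 2 = (t' div h) mod 2" using par[of t] par[of t'] c by simp
  then have dd: "t div h = t' div h" using rng[OF t] rng[OF t'] by (elim disjE) simp_all
  have "(2*t + t div h) mod n = (2*t' + t' div h) mod n" using c True dv unfolding col_def by simp
  then have "(2*t) mod n = (2*t') mod n" using dd by (intro mod_add_cancel_right[of "2*t" "t div h" n "2*t'"]) simp
  then have "2 * (t mod h) = 2 * (t' mod h)" unfolding h mod_mult_mult1 .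
  then have "t mod h = t' mod h" by simp
  then have "t = t' div h * h + t' mod h" using div_mult_mod_eq[of t h] dd by simp
  then show ?thesis by simp
qed



definition Zf :: "nat \<Rightarrow> nat \<Rightarrow> nat \<Rightarrow> nat \<Rightarrow> int" where
  "Zf n T l c = (if odd T \<and> l = T - 1 then int ((T+1)*n) - 1 - 2 * int c
     else if even l then int (l*n) + int c + 1
     else if odd T \<and> l = T - 2 then - (int ((l+1)*n) - int c)
     else int ((l+1)*n) - int c)"

definition Wf :: "nat \<Rightarrow> nat \<Rightarrow> nat \<Rightarrow> nat \<Rightarrow> nat" where
  "Wf n T l c = (if odd T \<and> l = T - 1 then (if n \<le> 2*c+1 then (T+1)*n - 1 - 2*c else (T-1)*n + 2 + 2*c)
     else if even l then l*n + c + 1 else (l+1)*n - c)"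

definition sg :: "nat \<Rightarrow> nat \<Rightarrow> int" where
  "sg T l = (if odd T \<and> l = T - 1 then -2 else if even l then 1 else if odd T \<and> l = T - 2 then 1 else -1)"

lemma Zf_lin: "Zf n T l c = Zf n T l 0 + sg T l * int c"
  unfolding Zf_def sg_def by auto

lemma alt_sum: "(\<Sum>l<2*(u::nat). (if even l then 1 else -1 :: int)) = 0"
  by (induction u) auto

lemma sg_sum: assumes "2 \<le> T" shows "(\<Sum>l<T. sg T l) = 0"
proof (cases "even T")
  case True
  then obtain u where u: "T = 2*u" by blast
  have "(\<Sum>l<T. sg T l) = (\<Sum>l<2*u. (if even l then 1 else -1 :: int))"
    unfolding u by (rule sum.cong) (auto simp: sg_def)
  then show ?thesis using alt_sum by simp
next
  case False
  define u where "u = (T - 3) div 2"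
  have u: "T = 2*u + 3" using False assms unfolding u_def by presburger
  have e1: "(\<Sum>l<T. sg T l) = (\<Sum>l<2*u. sg T l) + sg T (2*u) + sg T (2*u+1) + sg T (2*u+2)"
    unfolding u by (simp add: numeral_3_eq_3)
  have e2: "(\<Sum>l<2*u. sg T l) = (\<Sum>l<2*u. (if even l then 1 else -1 :: int))"
    by (rule sum.cong) (auto simp: sg_def u)
  have e3: "sg T (2*u) + sg T (2*u+1) + sg T (2*u+2) = 0"
    unfolding sg_def u by simp
  show ?thesis using e1 e2 e3 alt_sum[of u] by simp
qed

lemma Zf_colsum: assumes "2 \<le> T" shows "(\<Sum>l<T. Zf n T l c) = (\<Sum>l<T. Zf n T l 0)"
proof -
  have "(\<Sum>l<T. Zf n T l c) = (\<Sum>l<T. Zf n T l 0 + sg T l * int c)"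
    by (rule sum.cong) (simp_all add: Zf_lin[of n T _ c])
  also have "\<dots> = (\<Sum>l<T. Zf n T l 0) + (\<Sum>l<T. sg T l) * int c"
    by (simp add: sum.distrib sum_distrib_right)
  finally show ?thesis using sg_sum[OF assms] by simp
qed

lemma Wf_last1: "odd T \<Longrightarrow> l = T - 1 \<Longrightarrow> n \<le> 2*c+1 \<Longrightarrow> Wf n T l c = (T+1)*n - 1 - 2*c"
  unfolding Wf_def by simp
lemma Wf_last2: "odd T \<Longrightarrow> l = T - 1 \<Longrightarrow> \<not> n \<le> 2*c+1 \<Longrightarrow> Wf n T l c = (T-1)*n + 2 + 2*c"
  unfolding Wf_def by simp
lemma Wf_ev: assumes a: "\<not> (odd T \<and> l = T - 1)" and b: "even l" shows "Wf n T l c = l*n + c + 1"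
  unfolding Wf_def if_not_P[OF a] if_P[OF b] by (rule refl)
lemma Wf_od: assumes a: "\<not> (odd T \<and> l = T - 1)" and b: "odd l" shows "Wf n T l c = (l+1)*n - c"
  unfolding Wf_def if_not_P[OF a] if_not_P[OF b] by (rule refl)

lemma Wf_bounds: assumes "l < T" "c < n" shows "l*n + 1 \<le> Wf n T l c \<and> Wf n T l c \<le> l*n + n"
proof (cases "odd T \<and> l = T - 1")
  case True
  then have T: "T = l + 1" using assms by auto
  have e: "(T+1)*n = l*n + 2*n" "(T-1)*n = l*n" unfolding T by (simp_all add: algebra_simps)
  show ?thesis
  proof (cases "n \<le> 2*c+1")
    case True
    then show ?thesis using Wf_last1[of T l n c] \<open>odd T \<and> l = T - 1\<close> e assms(2) by linarith
  next
    case False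
    then show ?thesis using Wf_last2[of T l n c] \<open>odd T \<and> l = T - 1\<close> e assms(2) by linarith
  qed
next
  case False
  have e: "(l+1)*n = l*n + n" by (simp add: algebra_simps)
  show ?thesis
  proof (cases "even l")
    case True then show ?thesis using Wf_ev[OF False True, of n c] assms(2) by linarith
  next
    case F2: False then show ?thesis using Wf_od[OF False F2, of n c] assms(2) e by linarith
  qed
qed

lemma sub_inj: "(a::nat) - x = a - y \<Longrightarrow> x \<le> a \<Longrightarrow> y \<le> a \<Longrightarrow> x = y"
  by arith

lemma Wf_inj: assumes "l < T" "c < n" "c' < n" "Wf n T l c = Wf n T l c'" shows "c = c'"
proof (cases "odd T \<and> l = T - 1")
  case True
  then have T: "T = l + 1" using assms by auto
  have e: "(T+1)*n = l*n + 2*n" "(T-1)*n = l*n" unfolding T by (simp_all add: algebra_simps)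
  have W1: "Wf n T l x = (l*n + 2*n - 1) - 2*x" if "n \<le> 2*x+1" for x
  proof -
    have "Wf n T l x = (T+1)*n - 1 - 2*x" using Wf_last1[of T l n x] True that by blast
    then show ?thesis unfolding e(1) .
  qed
  have W2: "Wf n T l x = l*n + 2 + 2*x" if "\<not> n \<le> 2*x+1" for x
  proof -
    have "Wf n T l x = (T-1)*n + 2 + 2*x" using Wf_last2[of T l n x] True that by blast
    then show ?thesis unfolding e(2) .
  qed
  show ?thesis
  proof (cases "n \<le> 2*c+1")
    case c1: True
    show ?thesis
    proof (cases "n \<le> 2*c'+1")
      case True
      then have "(l*n + 2*n - 1) - 2*c = (l*n + 2*n - 1) - 2*c'" using W1[OF c1] W1[OF True] assms(4) by (simp only:)
      then have "2*c = 2*c'" by (rule sub_inj) (use assms(2,3) in linarith)+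
      then show ?thesis by simp
    next
      case False
      then have "(l*n + 2*n - 1) - 2*c = l*n + 2 + 2*c'" using W1[OF c1] W2[OF False] assms(4) by (simp only:)
      then have "2*n = 3 + 2*c + 2*c'" using c1 False assms(2,3) by linarith
      then show ?thesis by presburger
    qed
  next
    case c1: False
    show ?thesis
    proof (cases "n \<le> 2*c'+1")
      case True
      then have "(l*n + 2*n - 1) - 2*c' = l*n + 2 + 2*c" using W1[OF True] W2[OF c1] assms(4) by (simp only:)
      then have "2*n = 3 + 2*c + 2*c'" using c1 True assms(2,3) by linarith
      then show ?thesis by presburger
    next
      case False
      then show ?thesis using W2[OF c1] W2[OF False] assms(4) by linarith
    qed
  qed
next
  case False
  have e: "(l+1)*n = l*n + n" by (simp add: algebra_simps)
  show ?thesis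
  proof (cases "even l")
    case True then show ?thesis using Wf_ev[OF False True, of n c] Wf_ev[OF False True, of n c'] assms(4) by linarith
  next
    case F2: False
    then have "(l+1)*n - c = (l+1)*n - c'" using Wf_od[OF False F2, of n c] Wf_od[OF False F2, of n c'] assms(4) by (simp only:)
    then show ?thesis by (rule sub_inj) (use assms(2,3) e in linarith)+
  qed
qed

lemma Zf_last: "odd T \<Longrightarrow> l = T - 1 \<Longrightarrow> Zf n T l c = int ((T+1)*n) - 1 - 2 * int c"
  unfolding Zf_def by simp
lemma Zf_ev: assumes a: "\<not> (odd T \<and> l = T - 1)" and b: "even l" shows "Zf n T l c = int (l*n) + int c + 1"
  unfolding Zf_def if_not_P[OF a] if_P[OF b] by (rule refl)
lemma Zf_sp: assumes a: "\<not> (odd T \<and> l = T - 1)" and b: "odd l" and d: "odd T \<and> l = T - 2"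
  shows "Zf n T l c = - (int ((l+1)*n) - int c)"
  unfolding Zf_def if_not_P[OF a] if_not_P[OF b] if_P[OF d] by (rule refl)
lemma Zf_od: assumes a: "\<not> (odd T \<and> l = T - 1)" and b: "odd l" and d: "\<not> (odd T \<and> l = T - 2)"
  shows "Zf n T l c = int ((l+1)*n) - int c"
  unfolding Zf_def if_not_P[OF a] if_not_P[OF b] if_not_P[OF d] by (rule refl)

lemma Zf_mod: assumes lT: "l < T" and cn: "c < n"
  shows "Zf n T l c mod int (2*n*T+1) = int (Wf n T l c) \<or> Zf n T l c mod int (2*n*T+1) = int (2*n*T+1) - int (Wf n T l c)"
proof -
  define v where "v = int (2*n*T+1)"
  define W where "W = Wf n T l c"
  have b: "l*n + 1 \<le> W" "W \<le> l*n + n" using Wf_bounds[OF lT cn] unfolding W_def by auto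
  have "l*n + n \<le> T * n" using lT by (metis add.commute mult_Suc mult_le_mono1 Suc_leI)
  moreover have "T * n \<le> 2*n*T" by simp
  ultimately have wv: "1 \<le> int W" "int W < v" using b unfolding v_def by linarith+
  have P1: "Zf n T l c = int W \<Longrightarrow> ?thesis"
  proof -
    assume "Zf n T l c = int W"
    then have "Zf n T l c mod v = int W" using wv by simp
    then show ?thesis unfolding v_def W_def by simp
  qed
  have P2: "Zf n T l c = v - int W \<Longrightarrow> ?thesis"
  proof -
    assume h: "Zf n T l c = v - int W"
    have "(v - int W) mod v = v - int W" by (rule mod_pos_pos_trivial) (use wv in linarith)+
    then have "Zf n T l c mod v = v - int W" unfolding h .
    then show ?thesis unfolding v_def W_def by simp
  qed
  have P3: "Zf n T l c = - int W \<Longrightarrow> ?thesis"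
  proof -
    assume h: "Zf n T l c = - int W"
    have "int W mod v = int W" using wv by simp
    then have "(- int W) mod v = v - int W" using wv by (simp add: zmod_zminus1_eq_if)
    then have "Zf n T l c mod v = v - int W" using h by simp
    then show ?thesis unfolding v_def W_def by simp
  qed
  show ?thesis
  proof (cases "odd T \<and> l = T - 1")
    case True
    then have T: "T = l + 1" using lT by auto
    have z: "Zf n T l c = int ((T+1)*n) - 1 - 2 * int c" using Zf_last True by blast
    show ?thesis
    proof (cases "n \<le> 2*c+1")
      case c1: True
      have w: "W = (T+1)*n - 1 - 2*c" unfolding W_def using Wf_last1[of T l n c] True c1 by blast
      have "(T+1)*n \<ge> 1 + 2*c" using cn T by (simp add: algebra_simps)
      then have "int W = int ((T+1)*n) - 1 - 2 * int c" unfolding w by (simp add: of_nat_diff)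
      then show ?thesis using P1 z by simp
    next
      case c1: False
      have w: "W = (T-1)*n + 2 + 2*c" unfolding W_def using Wf_last2[of T l n c] True c1 by blast
      have e: "(T+1)*n + (T-1)*n = 2*n*T" unfolding T by (simp add: algebra_simps)
      have "int ((T+1)*n) + int ((T-1)*n) = int (2*n*T)" using e by (metis of_nat_add)
      then have "Zf n T l c = v - int W" unfolding z w v_def by simp
      then show ?thesis using P2 by simp
    qed
  next
    case False
    show ?thesis
    proof (cases "even l")
      case True
      have "Zf n T l c = int W" unfolding W_def Zf_ev[OF False True] Wf_ev[OF False True] by simp
      then show ?thesis using P1 by simp
    next
      case odd: False
      have cl: "c \<le> (l+1)*n" using cn by (simp add: algebra_simps)
      have w: "int W = int ((l+1)*n) - int c" unfolding W_def Wf_od[OF False odd] using cl by (simp add: of_nat_diff)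
      show ?thesis
      proof (cases "odd T \<and> l = T - 2")
        case True
        have "Zf n T l c = - int W" unfolding Zf_sp[OF False odd True] w by simp
        then show ?thesis using P3 by simp
      next
        case F2: False
        have "Zf n T l c = int W" unfolding Zf_od[OF False odd F2] w by simp
        then show ?thesis using P1 by simp
      qed
    qed
  qed
qed



lemma v_eq: "heffter_v 2 1 n k = n * k + 1"
  unfolding heffter_v_def by simp

lemma filled_Sigma: "filled_cells m n A = Sigma {..<m} (\<lambda>i. {j. j < n \<and> A i j \<noteq> None})"
  unfolding filled_cells_def by auto

lemma filled_Sigma2: "filled_cells m n A = prod.swap ` Sigma {..<n} (\<lambda>j. {i. i < m \<and> A i j \<noteq> None})"
  unfolding filled_cells_def by force

lemma card_filled_rows: "card (filled_cells m n A) = (\<Sum>i<m. card {j. j < n \<and> A i j \<noteq> None})"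
  unfolding filled_Sigma by (rule card_SigmaI) auto

lemma card_filled_cols: "card (filled_cells m n A) = (\<Sum>j<n. card {i. i < m \<and> A i j \<noteq> None})"
proof -
  have "card (filled_cells m n A) = card (Sigma {..<n} (\<lambda>j. {i. i < m \<and> A i j \<noteq> None}))"
    unfolding filled_Sigma2 by (rule card_image) (simp add: inj_on_def)
  also have "\<dots> = (\<Sum>j<n. card {i. i < m \<and> A i j \<noteq> None})"
    by (rule card_SigmaI) auto
  finally show ?thesis .
qed

lemma two_sum:
  fixes A :: "nat \<Rightarrow> int option"
  assumes "{j. j < n \<and> A j \<noteq> None} = {a, b}" "a \<noteq> b"
  shows "(\<Sum>j<n. case A j of None \<Rightarrow> 0 | Some x \<Rightarrow> x) = the (A a) + the (A b)"
proof -
  have ab: "a < n" "b < n" "A a \<noteq> None" "A b \<noteq> None" using assms(1) by blast+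
  have "(\<Sum>j<n. case A j of None \<Rightarrow> 0 | Some x \<Rightarrow> x) = (\<Sum>j\<in>{a,b}. case A j of None \<Rightarrow> (0::int) | Some x \<Rightarrow> x)"
  proof (rule sum.mono_neutral_cong_right)
    show "{a,b} \<subseteq> {..<n}" using ab by auto
    show "\<forall>i\<in>{..<n} - {a, b}. (case A i of None \<Rightarrow> 0 | Some x \<Rightarrow> x) = 0"
    proof
      fix i assume "i \<in> {..<n} - {a, b}"
      then have "A i = None" using assms(1) by blast
      then show "(case A i of None \<Rightarrow> 0 | Some x \<Rightarrow> x) = 0" by simp
    qed
  qed auto
  also have "\<dots> = the (A a) + the (A b)" using ab assms(2) by (auto split: option.splits)
  finally show ?thesis .
qed

lemma neg_mod: "(a + b) mod (c::int) = 0 \<Longrightarrow> (- b) mod c = a mod c"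
proof -
  assume h: "(a + b) mod c = 0"
  have "(- b) mod c = (a - (a + b)) mod c" by simp
  also have "\<dots> = (a - (a + b) mod c) mod c" by (rule mod_diff_right_eq[symmetric])
  also have "\<dots> = a mod c" using h by simp
  finally show ?thesis .
qed

lemma count_two_ge: "y = a \<or> y = b \<Longrightarrow> count {#a, b#} y \<ge> 1"
  by auto

lemma two_elem_zero: "S = {a,b} \<Longrightarrow> a \<noteq> b \<Longrightarrow> (0::nat) \<in> S \<Longrightarrow> \<exists>i2. S = {0,i2} \<and> i2 \<noteq> 0"
  by (metis insert_commute insert_iff singletonD)

lemma if_le_2: "(if P then 0 else 2::nat) \<le> 2" by simp

lemma not_22:
  assumes H: "heffter_array 2 1 m n 2 2 A" and m: "0 < m" and n: "0 < n"
  shows False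
proof -
  define v where "v = heffter_v 2 1 n 2"
  have v: "v = 2 * n + 1" unfolding v_def heffter_v_def by simp
  let ?g = "\<lambda>i j. case A i j of None \<Rightarrow> 0 | Some x \<Rightarrow> x"
  have H': "(\<forall>i<m. \<forall>j<n. \<forall>x. A i j = Some x \<longrightarrow> 0 \<le> x \<and> x < int v)
     \<and> (\<forall>i<m. card {j. j < n \<and> A i j \<noteq> None} = 2)
     \<and> (\<forall>j<n. card {i. i < m \<and> A i j \<noteq> None} = 2)
     \<and> (\<forall>y\<in>{0..<int v}. count (pm_entries v m n A) y = (if int (v div 1) dvd y then 0 else 2))
     \<and> (\<forall>i<m. (\<Sum>j<n. ?g i j) mod int v = 0)
     \<and> (\<forall>j<n. (\<Sum>i<m. ?g i j) mod int v = 0)"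
    using H unfolding heffter_array_def Let_def v_def .
  note rows = H'[THEN conjunct2, THEN conjunct1]
  note cols = H'[THEN conjunct2, THEN conjunct2, THEN conjunct1]
  note cnt = H'[THEN conjunct2, THEN conjunct2, THEN conjunct2, THEN conjunct1]
  note rs = H'[THEN conjunct2, THEN conjunct2, THEN conjunct2, THEN conjunct2, THEN conjunct1]
  note cs = H'[THEN conjunct2, THEN conjunct2, THEN conjunct2, THEN conjunct2, THEN conjunct2]
  have "card {j. j < n \<and> A 0 j \<noteq> None} = 2" using rows[rule_format, OF m] .
  then obtain j1 j2 where J: "{j. j < n \<and> A 0 j \<noteq> None} = {j1, j2}" "j1 \<noteq> j2"
    unfolding card_2_iff by blast
  have j1: "j1 < n" "A 0 j1 \<noteq> None" and j2: "j2 < n" "A 0 j2 \<noteq> None" using J(1) by blast+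
  have z: "0 \<in> {i. i < m \<and> A i j1 \<noteq> None}" using m j1(2) by simp
  have "card {i. i < m \<and> A i j1 \<noteq> None} = 2" using cols[rule_format, OF j1(1)] .
  then obtain a b where ab: "{i. i < m \<and> A i j1 \<noteq> None} = {a, b}" "a \<noteq> b"
    unfolding card_2_iff by blast
  obtain i2 where I: "{i. i < m \<and> A i j1 \<noteq> None} = {0, i2}" "i2 \<noteq> 0"
    using two_elem_zero[OF ab z] by blast
  have i2: "i2 < m" "A i2 j1 \<noteq> None" using I(1) by blast+
  define x1 where "x1 = the (A 0 j1)"
  define x2 where "x2 = the (A 0 j2)"
  define y where "y = the (A i2 j1)"
  have "(\<Sum>j<n. ?g 0 j) = x1 + x2"
    using two_sum[of n "A 0" j1 j2] J unfolding x1_def x2_def by blast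
  then have "(x1 + x2) mod int v = 0" using rs m by auto
  then have e2: "(- x2) mod int v = x1 mod int v" by (rule neg_mod)
  have "(\<Sum>i<m. ?g i j1) = x1 + y"
    using two_sum[of m "\<lambda>i. A i j1" 0 i2] I unfolding x1_def y_def by blast
  then have "(x1 + y) mod int v = 0" using cs j1 by auto
  then have e3: "(- y) mod int v = x1 mod int v" by (rule neg_mod)
  let ?f = "\<lambda>c. {# the (A (fst c) (snd c)) mod int v, (- the (A (fst c) (snd c))) mod int v #}"
  let ?F = "filled_cells m n A"
  let ?S = "{(0,j1), (0,j2), (i2,j1)}"
  have fin: "finite ?F" unfolding filled_cells_def by (rule finite_subset[of _ "{..<m} \<times> {..<n}"]) auto
  have sub: "?S \<subseteq> ?F" using m j1 j2 i2 unfolding filled_cells_def by auto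
  have c3: "card ?S = 3" using J(2) I(2) by auto
  have each: "\<forall>c\<in>?S. count (?f c) (x1 mod int v) \<ge> 1"
  proof
    fix c assume "c \<in> ?S"
    then have "c = (0,j1) \<or> c = (0,j2) \<or> c = (i2,j1)" by blast
    then show "count (?f c) (x1 mod int v) \<ge> 1"
    proof (elim disjE)
      assume "c = (0,j1)" then show ?thesis unfolding x1_def by (intro count_two_ge) simp
    next
      assume "c = (0,j2)" then show ?thesis using e2 unfolding x2_def by (intro count_two_ge) simp
    next
      assume "c = (i2,j1)" then show ?thesis using e3 unfolding y_def by (intro count_two_ge) simp
    qed
  qed
  have "count (pm_entries v m n A) (x1 mod int v) = (\<Sum>c\<in>?F. count (?f c) (x1 mod int v))"
    unfolding pm_entries_def sum_unfold_sum_mset[symmetric] count_sum ..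
  also have "\<dots> \<ge> (\<Sum>c\<in>?S. count (?f c) (x1 mod int v))"
    by (rule sum_mono2[OF fin sub]) simp
  finally have ge: "count (pm_entries v m n A) (x1 mod int v) \<ge> (\<Sum>c\<in>?S. count (?f c) (x1 mod int v))" .
  have "(\<Sum>c\<in>?S. count (?f c) (x1 mod int v)) \<ge> (\<Sum>c\<in>?S. 1)"
    by (rule sum_mono) (use each in blast)
  then have "(\<Sum>c\<in>?S. count (?f c) (x1 mod int v)) \<ge> 3" using c3 by simp
  with ge have ge3: "count (pm_entries v m n A) (x1 mod int v) \<ge> 3" by linarith
  have vp: "int v > 0" using v by simp
  have mem: "x1 mod int v \<in> {0..<int v}" unfolding atLeastLessThan_iff using pos_mod_sign[OF vp] pos_mod_bound[OF vp] by blast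
  have ceq: "count (pm_entries v m n A) (x1 mod int v) = (if int (v div 1) dvd (x1 mod int v) then 0 else 2)"
    by (rule bspec[OF cnt mem])
  have "count (pm_entries v m n A) (x1 mod int v) \<le> 2"
    unfolding ceq by (rule if_le_2)
  with ge3 show False by linarith
qed



lemma card_fiber_bij:
  assumes inj: "inj_on f I" and sub: "f ` I \<subseteq> U" and fin: "finite U" and cd: "card I = card U" and c: "c \<in> U"
  shows "card {t\<in>I. f t = c} = 1"
proof -
  have "card U > 0" using c fin card_gt_0_iff by blast
  then have "card I > 0" using cd by simp
  then have finI: "finite I" by (rule card_ge_0_finite)
  have "card (f ` I) = card U" using card_image[OF inj] cd by simp
  then have "f ` I = U" using card_subset_eq[OF fin sub] by simp
  then obtain t0 where t0: "t0 \<in> I" "f t0 = c" using c by blast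
  have "{t\<in>I. f t = c} = {t0}"
  proof (intro equalityI subsetI)
    fix t assume "t \<in> {t\<in>I. f t = c}"
    then have "t \<in> I" "f t = f t0" using t0 by auto
    then show "t \<in> {t0}" using inj t0(1) by (auto dest: inj_onD)
  qed (use t0 in auto)
  then show ?thesis by simp
qed

lemma layer_div: "l*n \<le> t \<Longrightarrow> t < l*n + n \<Longrightarrow> t div (n::nat) = l"
  by (metis add.commute div_nat_eqI mult.commute mult_Suc_right)

lemma layer_sum:
  fixes g :: "nat \<Rightarrow> nat \<Rightarrow> 'a::comm_semiring_1" and f :: "nat \<Rightarrow> nat"
  assumes inj: "\<And>l t t'. l*n \<le> t \<Longrightarrow> t < l*n+n \<Longrightarrow> l*n \<le> t' \<Longrightarrow> t' < l*n+n \<Longrightarrow> f t = f t' \<Longrightarrow> t = t'"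
    and rng: "\<And>t. f t < n" and c: "c < n"
  shows "(\<Sum>t<T*n. if f t = c then g (t div n) (f t) else 0) = (\<Sum>l<T. g l c)"
proof -
  let ?h = "\<lambda>t. if f t = c then g (t div n) (f t) else 0"
  have "(\<Sum>t<T*n. ?h t) = (\<Sum>l<T. sum ?h {l*n..<l*n+n})"
    by (rule sum.nat_group[symmetric])
  also have "\<dots> = (\<Sum>l<T. g l c)"
  proof (rule sum.cong[OF refl])
    fix l
    let ?I = "{l*n..<l*n+n}"
    have "sum ?h ?I = (\<Sum>t\<in>?I. if f t = c then g l c else 0)"
      by (rule sum.cong[OF refl]) (auto simp: layer_div)
    also have "\<dots> = (\<Sum>t\<in>{t\<in>?I. f t = c}. g l c)"
      by (rule sum.inter_filter[symmetric]) simp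
    also have "\<dots> = of_nat (card {t\<in>?I. f t = c}) * g l c" by simp
    also have "card {t\<in>?I. f t = c} = 1"
    proof (rule card_fiber_bij[where U = "{..<n}"])
      show "inj_on f ?I" by (rule inj_onI) (use inj in auto)
      show "f ` ?I \<subseteq> {..<n}" using rng by auto
    qed (use c in auto)
    finally show "sum ?h ?I = g l c" by simp
  qed
  finally show ?thesis .
qed

lemma pred_mod: assumes "a < n" "j < (n::nat)" shows "(a + 1) mod n = j \<longleftrightarrow> a = (j + n - 1) mod n"
proof (cases "a + 1 = n")
  case True
  then have "(a+1) mod n = 0" by simp
  moreover have "(j + n - 1) mod n = a \<longleftrightarrow> j = 0"
  proof
    assume h: "(j + n - 1) mod n = a"
    show "j = 0"
    proof (rule ccontr)
      assume "j \<noteq> 0"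
      then have "(j + n - 1) mod n = j - 1" using assms(2) by (simp add: le_mod_geq)
      then show False using h True assms(2) \<open>j \<noteq> 0\<close> by linarith
    qed
  next
    assume "j = 0" then show "(j + n - 1) mod n = a" using True by simp
  qed
  ultimately show ?thesis by auto
next
  case False
  then have an: "a + 1 < n" using assms(1) by linarith
  then have "(a+1) mod n = a + 1" by simp
  moreover have "(j + n - 1) mod n = (if j = 0 then n - 1 else j - 1)"
  proof (cases "j = 0")
    case True then show ?thesis using assms by simp
  next
    case False
    then have "j + n - 1 = (j - 1) + n" by simp
    then have "(j + n - 1) mod n = ((j - 1) + n) mod n" by simp
    also have "\<dots> = (j - 1) mod n" by simp
    also have "\<dots> = j - 1" using assms(2) by simp
    finally show ?thesis using False by simp
  qed
  ultimately show ?thesis using an by auto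
qed



locale constr =
  fixes m n s k :: nat
  assumes mpos: "0 < m" and npos: "0 < n" and seven: "even s" and keven: "even k"
    and s2: "2 \<le> s" and k4: "4 \<le> k" and sn: "s \<le> n" and ms: "m * s = n * k"
begin

definition "T = k div 2"
definition "N = T * n"
definition "L = m * s"
definition "v = n * k + 1"
definition "cc t = col n (2*t)"
definition "z t = Zf n T (t div n) (cc t)"
definition "wt t = Wf n T (t div n) (cc t)"
definition "val p = (if even p then - z (p div 2) else z (p div 2))"
definition "\<phi> p = (p div s, col n p)"

lemma kT: "k = 2 * T" unfolding T_def using keven by (metis dvd_mult_div_cancel)
lemma T2: "2 \<le> T" unfolding T_def using k4 by linarith
lemma LN: "L = 2 * N"
proof -
  have "L = n * k" unfolding L_def using ms .
  also have "\<dots> = n * (2 * T)" using arg_cong[OF kT, of "\<lambda>x. n * x"] .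
  also have "\<dots> = 2 * N" unfolding N_def by (simp add: algebra_simps)
  finally show ?thesis .
qed
lemma vT: "v = 2*n*T + 1"
proof -
  have "v = n * (2 * T) + 1" unfolding v_def using arg_cong[OF kT, of "\<lambda>x. n * x + 1"] .
  then show ?thesis by (simp add: algebra_simps)
qed
lemma spos: "0 < s" using s2 by simp

lemma phi_inj: "inj_on \<phi> {..<L}"
proof (rule inj_onI)
  fix p p' assume "p \<in> {..<L}" "p' \<in> {..<L}" "\<phi> p = \<phi> p'"
  then have "p div s = p' div s" "col n p = col n p'" unfolding \<phi>_def by auto
  then show "p = p'" by (rule col_row_inj[OF npos sn spos])
qed

lemma phi_rng: "p < L \<Longrightarrow> fst (\<phi> p) < m \<and> snd (\<phi> p) < n"
proof -
  assume "p < L"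
  then have "p div s < m" unfolding L_def using spos by (simp add: div_less_iff_less_mult)
  then show ?thesis unfolding \<phi>_def using col_lt[OF npos] by simp
qed

sublocale G: gen L m n \<phi> val v
proof
  show "inj_on \<phi> {..<L}" by (rule phi_inj)
  show "\<And>p. p < L \<Longrightarrow> fst (\<phi> p) < m \<and> snd (\<phi> p) < n" by (rule phi_rng)
  show "0 < v" unfolding v_def by simp
qed


lemma row_pos: assumes "i < m" shows "{p. p < L \<and> fst (\<phi> p) = i} = {i*s..<i*s+s}"
proof (intro equalityI subsetI)
  fix p assume "p \<in> {p. p < L \<and> fst (\<phi> p) = i}"
  then have "p div s = i" unfolding \<phi>_def by simp
  then show "p \<in> {i*s..<i*s+s}" using spos
    by (metis atLeastLessThan_iff add.commute div_times_less_eq_dividend dividend_less_div_times)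
next
  fix p assume h: "p \<in> {i*s..<i*s+s}"
  then have "p div s = i" using layer_div[of i s p] by simp
  moreover have "i*s + s \<le> m*s" using assms by (metis Suc_leI add.commute mult_Suc mult_le_mono1)
  ultimately show "p \<in> {p. p < L \<and> fst (\<phi> p) = i}" using h unfolding \<phi>_def L_def by auto
qed

lemma row_card: "i < m \<Longrightarrow> card {p. p < L \<and> fst (\<phi> p) = i} = s"
  using row_pos by simp

lemma val_pair: "even a \<Longrightarrow> val a + val (a+1) = 0"
  unfolding val_def by simp

lemma val_pair_sum: "even a \<Longrightarrow> (\<Sum>p\<in>{a..<a+2*u}. val p) = 0"
proof (induction u)
  case 0 then show ?case by simp
next
  case (Suc u)
  have "{a..<a+2*Suc u} = insert (a+2*u+1) (insert (a+2*u) {a..<a+2*u})" by auto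
  then have "(\<Sum>p\<in>{a..<a+2*Suc u}. val p) = val (a+2*u+1) + (val (a+2*u) + (\<Sum>p\<in>{a..<a+2*u}. val p))"
    by simp
  also have "\<dots> = 0" using Suc val_pair[of "a+2*u"] by simp
  finally show ?case .
qed

lemma row_sum0: assumes "i < m" shows "(\<Sum>p\<in>{p. p < L \<and> fst (\<phi> p) = i}. val p mod int v) mod int v = 0"
proof -
  obtain u where u: "s = 2*u" using seven by blast
  have "even (i*s)" using seven by simp
  then have "(\<Sum>p\<in>{i*s..<i*s+s}. val p) = 0" unfolding u by (rule val_pair_sum)
  then show ?thesis unfolding row_pos[OF assms] mod_sum_eq by simp
qed

lemma cc_lt: "cc t < n" unfolding cc_def by (rule col_lt[OF npos])

lemma cc_inj: "l*n \<le> t \<Longrightarrow> t < l*n+n \<Longrightarrow> l*n \<le> t' \<Longrightarrow> t' < l*n+n \<Longrightarrow> cc t = cc t' \<Longrightarrow> t = t'"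
  unfolding cc_def by (rule col_layer_inj[OF npos])

lemma split2: "(\<Sum>p<L. F p) = (\<Sum>t<N. F (2*t) + F (2*t+1))"
proof -
  have "(\<Sum>p<L. F p) = (\<Sum>p<N*2. F p)" using LN by (simp add: mult.commute)
  also have "\<dots> = (\<Sum>t<N. sum F {t*2..<t*2+2})" by (rule sum.nat_group[symmetric])
  also have "\<dots> = (\<Sum>t<N. F (2*t) + F (2*t+1))"
  proof (rule sum.cong[OF refl])
    fix t :: nat
    have "{t*2..<t*2+2} = {2*t, 2*t+1}" by auto
    then show "sum F {t*2..<t*2+2} = F (2*t) + F (2*t+1)" by simp
  qed
  finally show ?thesis .
qed

lemma col_even: "col n (2*t) = cc t" unfolding cc_def ..
lemma col_odd: "col n (2*t+1) = (cc t + 1) mod n" unfolding cc_def by (rule col_Suc[OF npos])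

lemma layer_count: "c < n \<Longrightarrow> (\<Sum>t<N. if cc t = c then (1::nat) else 0) = T"
proof -
  assume c: "c < n"
  have "(\<Sum>t<T*n. if cc t = c then (\<lambda>l c. 1::nat) (t div n) (cc t) else 0) = (\<Sum>l<T. (\<lambda>l c. 1::nat) l c)"
    by (rule layer_sum[where f = cc]) (use cc_inj cc_lt c in auto)
  then show ?thesis unfolding N_def by simp
qed

lemma layer_zsum: "c < n \<Longrightarrow> (\<Sum>t<N. if cc t = c then z t else 0) = (\<Sum>l<T. Zf n T l c)"
proof -
  assume c: "c < n"
  have "(\<Sum>t<T*n. if cc t = c then Zf n T (t div n) (cc t) else 0) = (\<Sum>l<T. Zf n T l c)"
    by (rule layer_sum[where f = cc]) (use cc_inj cc_lt c in auto)
  then show ?thesis unfolding N_def z_def by simp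
qed

definition "pj j = (j + n - 1) mod n"

lemma odd_hit: "j < n \<Longrightarrow> ((cc t + 1) mod n = j) = (cc t = pj j)"
  unfolding pj_def by (rule pred_mod[OF cc_lt])

lemma pj_lt: "pj j < n" unfolding pj_def using npos by simp

lemma col_card: assumes "j < n" shows "card {p. p < L \<and> snd (\<phi> p) = j} = k"
proof -
  have "card {p. p < L \<and> snd (\<phi> p) = j} = card {p\<in>{..<L}. col n p = j}" unfolding \<phi>_def by simp
  also have "\<dots> = (\<Sum>p\<in>{p\<in>{..<L}. col n p = j}. (1::nat))" by simp
  also have "\<dots> = (\<Sum>p<L. if col n p = j then 1 else 0)" by (rule sum.inter_filter) simp
  also have "\<dots> = (\<Sum>t<N. (if cc t = j then 1 else 0) + (if cc t = pj j then 1 else 0))"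
    unfolding split2 col_even col_odd odd_hit[OF assms] ..
  also have "\<dots> = T + T" unfolding sum.distrib layer_count[OF assms] layer_count[OF pj_lt] ..
  also have "\<dots> = k" using kT by simp
  finally show ?thesis .
qed

lemma col_sum0: assumes "j < n" shows "(\<Sum>p\<in>{p. p < L \<and> snd (\<phi> p) = j}. val p mod int v) mod int v = 0"
proof -
  have "(\<Sum>p\<in>{p. p < L \<and> snd (\<phi> p) = j}. val p) = (\<Sum>p\<in>{p\<in>{..<L}. col n p = j}. val p)"
    unfolding \<phi>_def by simp
  also have "\<dots> = (\<Sum>p<L. if col n p = j then val p else 0)" by (rule sum.inter_filter) simp
  also have "\<dots> = (\<Sum>t<N. (if cc t = j then - z t else 0) + (if cc t = pj j then z t else 0))"
    unfolding split2 col_even col_odd odd_hit[OF assms] val_def by (intro sum.cong refl) auto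
  also have "\<dots> = (\<Sum>t<N. - (if cc t = j then z t else 0)) + (\<Sum>t<N. if cc t = pj j then z t else 0)"
    unfolding sum.distrib[symmetric] by (intro sum.cong refl) simp
  also have "\<dots> = - (\<Sum>t<N. if cc t = j then z t else 0) + (\<Sum>t<N. if cc t = pj j then z t else 0)"
    unfolding sum_negf ..
  also have "\<dots> = - (\<Sum>l<T. Zf n T l j) + (\<Sum>l<T. Zf n T l (pj j))"
    unfolding layer_zsum[OF assms] layer_zsum[OF pj_lt] ..
  also have "\<dots> = 0" using Zf_colsum[OF T2, of n j] Zf_colsum[OF T2, of n "pj j"] by simp
  finally have "(\<Sum>p\<in>{p. p < L \<and> snd (\<phi> p) = j}. val p) = 0" .
  then show ?thesis unfolding mod_sum_eq by simp
qed


lemma tdiv: "t < N \<Longrightarrow> t div n < T"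
  unfolding N_def using npos by (simp add: div_less_iff_less_mult)

lemma tlayer: "(t div n) * n \<le> t \<and> t < (t div n) * n + n"
  using npos by (metis add.commute div_times_less_eq_dividend dividend_less_div_times)

lemma z_mod: "t < N \<Longrightarrow> z t mod int v = int (wt t) \<or> z t mod int v = int v - int (wt t)"
  unfolding z_def wt_def vT using Zf_mod[OF tdiv cc_lt] by blast

lemma wt_bounds: "t < N \<Longrightarrow> (t div n)*n + 1 \<le> wt t \<and> wt t \<le> (t div n)*n + n"
  unfolding wt_def by (rule Wf_bounds[OF tdiv cc_lt])

lemma wt_rng: "t < N \<Longrightarrow> 1 \<le> wt t \<and> wt t \<le> N"
proof -
  assume t: "t < N"
  have "(t div n) + 1 \<le> T" using tdiv[OF t] by simp
  then have "((t div n) + 1) * n \<le> T * n" by (rule mult_le_mono1)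
  then show ?thesis using wt_bounds[OF t] unfolding N_def by (simp add: algebra_simps)
qed

lemma wt_inj: "inj_on wt {..<N}"
proof (rule inj_onI)
  fix t t' assume t: "t \<in> {..<N}" and t': "t' \<in> {..<N}" and e: "wt t = wt t'"
  have b1: "(t div n)*n \<le> wt t - 1" "wt t - 1 < (t div n)*n + n" using wt_bounds[of t] t by auto
  have b2: "(t' div n)*n \<le> wt t - 1" "wt t - 1 < (t' div n)*n + n" using wt_bounds[of t'] t' e by auto
  have "(wt t - 1) div n = t div n" by (rule layer_div) (use b1 in auto)
  moreover have "(wt t - 1) div n = t' div n" by (rule layer_div) (use b2 in auto)
  ultimately have d: "t div n = t' div n" by simp
  have "Wf n T (t div n) (cc t) = Wf n T (t div n) (cc t')" using e d unfolding wt_def by simp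
  moreover have l: "t div n < T" using tdiv t by simp
  ultimately have "cc t = cc t'" using Wf_inj[OF l cc_lt cc_lt] by blast
  then show "t = t'" using cc_inj[of "t div n" t t'] tlayer[of t] tlayer[of t'] d by simp
qed

lemma wt_card1: "1 \<le> w \<Longrightarrow> w \<le> N \<Longrightarrow> card {t\<in>{..<N}. wt t = w} = 1"
  by (rule card_fiber_bij[OF wt_inj, where U = "{1..N}"]) (use wt_rng in auto)

lemma wt_card0: "\<not> (1 \<le> w \<and> w \<le> N) \<Longrightarrow> card {t\<in>{..<N}. wt t = w} = 0"
proof -
  assume h: "\<not> (1 \<le> w \<and> w \<le> N)"
  have "{t\<in>{..<N}. wt t = w} = {}" using wt_rng h by auto
  then show ?thesis by simp
qed

lemma cnt_pair: "count {#a, b#} y = (if a = y then 1 else 0) + (if b = y then 1 else 0)"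
  by simp

lemma cnt_z: assumes t: "t < N"
  shows "count {# z t mod int v, (- z t) mod int v #} y = (if int (wt t) = y then 1 else 0) + (if int v - int (wt t) = y then 1 else 0)"
proof -
  have "v > 0" unfolding v_def by simp
  then have vp: "int v > 0" by simp
  have wr: "1 \<le> wt t" "wt t \<le> N" using wt_rng[OF t] by auto
  have Nv: "N < v" unfolding vT N_def by simp
  have wv: "int (wt t) < int v" using wr Nv by linarith
  from z_mod[OF t] show ?thesis
  proof
    assume h: "z t mod int v = int (wt t)"
    then have "(- z t) mod int v = int v - int (wt t)" using wr by (simp add: zmod_zminus1_eq_if)
    then show ?thesis unfolding cnt_pair h by simp
  next
    assume h: "z t mod int v = int v - int (wt t)"
    then have "(- z t) mod int v = int v - (int v - int (wt t))" using wr wv by (simp add: zmod_zminus1_eq_if)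
    then have "(- z t) mod int v = int (wt t)" by simp
    then show ?thesis unfolding cnt_pair h by simp
  qed
qed

lemma count_pm: assumes y: "y \<in> {0..<int v}"
  shows "count (\<Sum>p<L. {# val p mod int v, (- val p) mod int v #}) y = (if y = 0 then 0 else 2)"
proof -
  let ?c = "\<lambda>t. count {# z t mod int v, (- z t) mod int v #} y"
  have "count (\<Sum>p<L. {# val p mod int v, (- val p) mod int v #}) y = (\<Sum>p<L. count {# val p mod int v, (- val p) mod int v #} y)"
    by (rule count_sum)
  also have "\<dots> = (\<Sum>t<N. 2 * ?c t)"
    unfolding split2
  proof (rule sum.cong[OF refl])
    fix t
    have "count {# val (2*t) mod int v, (- val (2*t)) mod int v #} y = ?c t"
      unfolding val_def by (simp add: add_mset_commute)
    moreover have "count {# val (2*t+1) mod int v, (- val (2*t+1)) mod int v #} y = ?c t"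
      unfolding val_def by simp
    ultimately show "count {# val (2*t) mod int v, (- val (2*t)) mod int v #} y + count {# val (2*t+1) mod int v, (- val (2*t+1)) mod int v #} y = 2 * ?c t"
      by simp
  qed
  also have "\<dots> = 2 * (\<Sum>t<N. ?c t)" by (simp add: sum_distrib_left)
  also have "(\<Sum>t<N. ?c t) = (\<Sum>t<N. (if int (wt t) = y then 1 else 0) + (if int v - int (wt t) = y then 1 else 0))"
    by (rule sum.cong[OF refl]) (use cnt_z in simp)
  also have "\<dots> = card {t\<in>{..<N}. wt t = nat y} + card {t\<in>{..<N}. wt t = nat (int v - y)}"
  proof -
    have 1: "(\<Sum>t<N. (if int (wt t) = y then 1 else 0::nat)) = card {t\<in>{..<N}. wt t = nat y}"
    proof -
      have "(\<Sum>t<N. (if int (wt t) = y then 1 else 0::nat)) = (\<Sum>t<N. (if wt t = nat y then 1 else 0))"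
        by (rule sum.cong[OF refl]) (use y in auto)
      also have "\<dots> = card {t\<in>{..<N}. wt t = nat y}" by (simp add: sum.inter_filter[symmetric])
      finally show ?thesis .
    qed
    have 2: "(\<Sum>t<N. (if int v - int (wt t) = y then 1 else 0::nat)) = card {t\<in>{..<N}. wt t = nat (int v - y)}"
    proof -
      have "(\<Sum>t<N. (if int v - int (wt t) = y then 1 else 0::nat)) = (\<Sum>t<N. (if wt t = nat (int v - y) then 1 else 0))"
        by (rule sum.cong[OF refl]) (use y in auto)
      also have "\<dots> = card {t\<in>{..<N}. wt t = nat (int v - y)}" by (simp add: sum.inter_filter[symmetric])
      finally show ?thesis .
    qed
    show ?thesis unfolding sum.distrib 1 2 ..
  qed
  also have "\<dots> = (if y = 0 then 0 else 1)"
  proof (cases "y = 0")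
    case True
    have c1: "card {t\<in>{..<N}. wt t = nat y} = 0" by (rule wt_card0) (use True in simp)
    have Nv: "N < v" unfolding vT N_def by simp
    have c2: "nat (int v - y) = v" using True by simp
    have c3: "card {t\<in>{..<N}. wt t = v} = 0" by (rule wt_card0) (use Nv in linarith)
    have "card {t\<in>{..<N}. wt t = nat y} + card {t\<in>{..<N}. wt t = nat (int v - y)} = 0 + 0"
      by (simp only: c1 c2 c3)
    then show ?thesis using True by simp
  next
    case False
    then have y1: "1 \<le> y" "y < int v" using y by auto
    have vN: "int v = 2 * int N + 1" unfolding vT N_def by (simp add: algebra_simps)
    define w2 where "w2 = nat (int v - y)"
    have w2: "int w2 = int v - y" unfolding w2_def using y1 by simp
    define w1 where "w1 = nat y"
    have w1: "int w1 = y" unfolding w1_def using y1 by simp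
    show ?thesis
    proof (cases "y \<le> int N")
      case True
      have c1: "card {t\<in>{..<N}. wt t = w1} = 1" by (rule wt_card1) (use w1 y1 True in linarith)+
      have c2: "card {t\<in>{..<N}. wt t = w2} = 0" by (rule wt_card0) (use w2 vN True in linarith)
      show ?thesis using c1 c2 False unfolding w1_def w2_def by simp
    next
      case F: False
      have c1: "card {t\<in>{..<N}. wt t = w1} = 0" by (rule wt_card0) (use w1 F in linarith)
      have c2: "card {t\<in>{..<N}. wt t = w2} = 1" by (rule wt_card1) (use w2 vN F y1 in linarith)+
      show ?thesis using c1 c2 False unfolding w1_def w2_def by simp
    qed
  qed
  finally show ?thesis by simp
qed


lemma dvd_iff0: "y \<in> {0..<int v} \<Longrightarrow> (int (v div 1) dvd y) = (y = 0)"
proof -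
  assume y: "y \<in> {0..<int v}"
  show ?thesis
  proof
    assume "int (v div 1) dvd y"
    then obtain q where q: "y = int v * q" by auto
    show "y = 0"
    proof (rule ccontr)
      assume "y \<noteq> 0"
      then have "q \<ge> 1" using q y by (smt (verit) atLeastLessThan_iff mult_nonneg_nonpos of_nat_0_le_iff mult_eq_0_iff)
      then have "y \<ge> int v" using q by (simp add: mult_le_cancel_left1)
      then show False using y by simp
    qed
  qed simp
qed

theorem is_heffter: "heffter_array 2 1 m n s k G.A"
proof -
  have hv: "heffter_v 2 1 n k = v" unfolding heffter_v_def v_def by simp
  show ?thesis unfolding heffter_array_def Let_def hv
  proof (intro conjI allI impI ballI)
    fix i j x assume "i < m" "j < n" "G.A i j = Some x"
    then show "0 \<le> x" "x < int v" using G.range by auto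
  next
    fix i assume "i < m" then show "card {j. j < n \<and> G.A i j \<noteq> None} = s"
      unfolding G.row_card by (rule row_card)
  next
    fix j assume "j < n" then show "card {i. i < m \<and> G.A i j \<noteq> None} = k"
      unfolding G.col_card by (rule col_card)
  next
    fix y assume y: "y \<in> {0..<int v}"
    show "count (pm_entries v m n G.A) y = (if int (v div 1) dvd y then 0 else 2)"
      unfolding G.pm count_pm[OF y] dvd_iff0[OF y] ..
  next
    fix i assume "i < m" then show "(\<Sum>j<n. case G.A i j of None \<Rightarrow> 0 | Some x \<Rightarrow> x) mod int v = 0"
      unfolding G.row_sum by (rule row_sum0)
  next
    fix j assume "j < n" then show "(\<Sum>i<m. case G.A i j of None \<Rightarrow> 0 | Some x \<Rightarrow> x) mod int v = 0"
      unfolding G.col_sum by (rule col_sum0)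
  qed
qed

end

lemma construct:
  assumes "0 < m" "0 < n" "even s" "even k" "2 \<le> s" "4 \<le> k" "s \<le> n" "m * s = n * k"
  shows "\<exists>A. heffter_array 2 1 m n s k A"
proof -
  interpret constr m n s k by unfold_locales (use assms in auto)
  show ?thesis using is_heffter by blast
qed



lemma transpose:
  assumes H: "heffter_array 2 1 n m k s B" and ms: "m * s = n * k"
  shows "heffter_array 2 1 m n s k (\<lambda>i j. B j i)"
proof -
  define v where "v = n * k + 1"
  have hv1: "heffter_v 2 1 m s = v" unfolding heffter_v_def v_def using ms by simp
  have hv2: "heffter_v 2 1 n k = v" unfolding heffter_v_def v_def by simp
  let ?gB = "\<lambda>i j. case B i j of None \<Rightarrow> 0 | Some x \<Rightarrow> x"
  have H': "(\<forall>i<n. \<forall>j<m. \<forall>x. B i j = Some x \<longrightarrow> 0 \<le> x \<and> x < int v)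
     \<and> (\<forall>i<n. card {j. j < m \<and> B i j \<noteq> None} = k)
     \<and> (\<forall>j<m. card {i. i < n \<and> B i j \<noteq> None} = s)
     \<and> (\<forall>y\<in>{0..<int v}. count (pm_entries v n m B) y = (if int (v div 1) dvd y then 0 else 2))
     \<and> (\<forall>i<n. (\<Sum>j<m. ?gB i j) mod int v = 0)
     \<and> (\<forall>j<m. (\<Sum>i<n. ?gB i j) mod int v = 0)"
    using H unfolding heffter_array_def Let_def hv1 .
  note r0 = H'[THEN conjunct1]
  note rows = H'[THEN conjunct2, THEN conjunct1]
  note cols = H'[THEN conjunct2, THEN conjunct2, THEN conjunct1]
  note cnt = H'[THEN conjunct2, THEN conjunct2, THEN conjunct2, THEN conjunct1]
  note rs = H'[THEN conjunct2, THEN conjunct2, THEN conjunct2, THEN conjunct2, THEN conjunct1]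
  note cs = H'[THEN conjunct2, THEN conjunct2, THEN conjunct2, THEN conjunct2, THEN conjunct2]
  have fc: "filled_cells m n (\<lambda>i j. B j i) = prod.swap ` filled_cells n m B"
    unfolding filled_cells_def by force
  have pm: "pm_entries v m n (\<lambda>i j. B j i) = pm_entries v n m B"
  proof -
    let ?f = "\<lambda>c. {# the (B (fst c) (snd c)) mod int v, (- the (B (fst c) (snd c))) mod int v #}"
    have "pm_entries v m n (\<lambda>i j. B j i) = (\<Sum>c\<in>prod.swap ` filled_cells n m B. ?f (prod.swap c))"
      unfolding pm_entries_def fc sum_unfold_sum_mset[symmetric] by simp
    also have "\<dots> = (\<Sum>c\<in>filled_cells n m B. ?f c)"
      by (subst sum.reindex) (auto simp: inj_on_def)
    also have "\<dots> = pm_entries v n m B"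
      unfolding pm_entries_def sum_unfold_sum_mset[symmetric] ..
    finally show ?thesis .
  qed
  show ?thesis unfolding heffter_array_def Let_def hv2
  proof (intro conjI)
    show "\<forall>i<m. \<forall>j<n. \<forall>x. B j i = Some x \<longrightarrow> 0 \<le> x \<and> x < int v" using r0 by blast
    show "\<forall>i<m. card {j. j < n \<and> B j i \<noteq> None} = s" using cols by blast
    show "\<forall>j<n. card {i. i < m \<and> B j i \<noteq> None} = k" using rows by blast
    show "\<forall>y\<in>{0..<int v}. count (pm_entries v m n (\<lambda>i j. B j i)) y = (if int (v div 1) dvd y then 0 else 2)"
      unfolding pm by (rule cnt)
    show "\<forall>i<m. (\<Sum>j<n. case B j i of None \<Rightarrow> 0 | Some x \<Rightarrow> x) mod int v = 0" using cs by blast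
    show "\<forall>j<n. (\<Sum>i<m. case B j i of None \<Rightarrow> 0 | Some x \<Rightarrow> x) mod int v = 0" using rs by blast
  qed
qed

theorem theorem4:
  fixes m n s k :: nat
  assumes "0 < m" "0 < n" "0 < s" "0 < k" "even s" "even k"
  shows "exists_heffter 2 1 m n s k \<longleftrightarrow>
           m * s = n * k \<and> 2 \<le> s \<and> s \<le> n \<and> 2 \<le> k \<and> k \<le> m \<and> \<not> (s = 2 \<and> k = 2)"
proof
  assume "exists_heffter 2 1 m n s k"
  then obtain A where H: "heffter_array 2 1 m n s k A" unfolding exists_heffter_def by blast
  define v where "v = heffter_v 2 1 n k"
  have rows: "\<forall>i<m. card {j. j < n \<and> A i j \<noteq> None} = s"
   and cols: "\<forall>j<n. card {i. i < m \<and> A i j \<noteq> None} = k"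
    using H unfolding heffter_array_def Let_def by (meson conjunct1 conjunct2)+
  have "card (filled_cells m n A) = (\<Sum>i<m. s)" unfolding card_filled_rows using rows by simp
  moreover have "card (filled_cells m n A) = (\<Sum>j<n. k)" unfolding card_filled_cols using cols by simp
  ultimately have ms: "m * s = n * k" by simp
  have "s = card {j. j < n \<and> A 0 j \<noteq> None}" using rows assms(1) by simp
  also have "\<dots> \<le> card {..<n}" by (rule card_mono) auto
  finally have sn: "s \<le> n" by simp
  have "k = card {i. i < m \<and> A i 0 \<noteq> None}" using cols assms(2) by simp
  also have "\<dots> \<le> card {..<m}" by (rule card_mono) auto
  finally have km: "k \<le> m" by simp
  have s2: "2 \<le> s" using assms(3,5) by presburger
  have k2: "2 \<le> k" using assms(4,6) by presburger
  have n22: "\<not> (s = 2 \<and> k = 2)"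
  proof
    assume "s = 2 \<and> k = 2"
    then have "heffter_array 2 1 m n 2 2 A" using H by simp
    then show False using not_22 assms(1,2) by blast
  qed
  show "m * s = n * k \<and> 2 \<le> s \<and> s \<le> n \<and> 2 \<le> k \<and> k \<le> m \<and> \<not> (s = 2 \<and> k = 2)"
    using ms s2 sn k2 km n22 by blast
next
  assume c: "m * s = n * k \<and> 2 \<le> s \<and> s \<le> n \<and> 2 \<le> k \<and> k \<le> m \<and> \<not> (s = 2 \<and> k = 2)"
  have "\<exists>A. heffter_array 2 1 m n s k A"
  proof (cases "4 \<le> k")
    case True
    then show ?thesis using construct[of m n s k] assms c by blast
  next
    case False
    then have "k = 2" using c assms(6) by presburger
    then have "4 \<le> s" using c assms(5) by presburger
    then obtain B where "heffter_array 2 1 n m k s B"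
      using construct[of n m k s] assms c by (metis mult.commute)
    then have "heffter_array 2 1 m n s k (\<lambda>i j. B j i)" by (rule transpose) (use c in blast)
    then show ?thesis by blast
  qed
  moreover have "2 dvd 2 * n * k" by simp
  ultimately show "exists_heffter 2 1 m n s k" unfolding exists_heffter_def by simp
qed

end
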